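(* Let $X=\{x_1,\dots,x_n\}$ be a finite $T_0$-space with matrix $X_M$, having rows $r_1,\dots,r_n$ and columns $c_1,\dots,c_n$. Then $x_i$ is an up beat point if and only if there exists $1\le j\le n$ with $r_i-r_j=-e_i$; and $x_i$ is a down beat point if and only if there exists $1\le j\le n$ with $c_i-c_j=-e_i$.
   Context: A finite $T_0$-space is identified with a finite poset via $x\le y$ iff $U_x\subseteq U_y$, where $U_x$ is the minimal open set containing $x$. For a labelling $X=\{x_1,\dots,x_n\}$, $X_M=(x_{i,j})$ is the $n\times n$ matrix with $x_{i,j}=0$ if $x_i\le x_j$ and $x_{i,j}=1$ otherwise. $e_i$ denotes the vector (row or column, as appropriate) with $1$ in position $i$ and $0$ elsewhere. Let $\hat U_x=\{y\in X: y<x\}$ and $\hat F_x=\{y\in X: y>x\}$. A point $x$ is a down beat point if $\hat U_x$ has a maximum, and an up beat point if $\hat F_x$ has a minimum. *)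

theory Defs
  imports "HOL-Analysis.Analysis"
begin

definition minopen :: "'a topology \<Rightarrow> 'a \<Rightarrow> 'a set" where
  "minopen T x = \<Inter> {U. openin T U \<and> x \<in> U}"

definition fle :: "'a topology \<Rightarrow> 'a \<Rightarrow> 'a \<Rightarrow> bool" where
  "fle T x y \<longleftrightarrow> x \<in> topspace T \<and> y \<in> topspace T \<and> minopen T x \<subseteq> minopen T y"

definition fless :: "'a topology \<Rightarrow> 'a \<Rightarrow> 'a \<Rightarrow> bool" where
  "fless T x y \<longleftrightarrow> fle T x y \<and> x \<noteq> y"

definition hatU :: "'a topology \<Rightarrow> 'a \<Rightarrow> 'a set" where
  "hatU T x = {y \<in> topspace T. fless T y x}"

definition hatF :: "'a topology \<Rightarrow> 'a \<Rightarrow> 'a set" where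
  "hatF T x = {y \<in> topspace T. fless T x y}"

definition down_beat :: "'a topology \<Rightarrow> 'a \<Rightarrow> bool" where
  "down_beat T x \<longleftrightarrow> (\<exists>m \<in> hatU T x. \<forall>y \<in> hatU T x. fle T y m)"

definition up_beat :: "'a topology \<Rightarrow> 'a \<Rightarrow> bool" where
  "up_beat T x \<longleftrightarrow> (\<exists>m \<in> hatF T x. \<forall>y \<in> hatF T x. fle T m y)"

text \<open>The matrix X_M for the labelling xs (indices 1..n): entry 0 if x_i \<le> x_j, else 1.\<close>
definition space_matrix :: "'a topology \<Rightarrow> (nat \<Rightarrow> 'a) \<Rightarrow> nat \<Rightarrow> nat \<Rightarrow> int" where
  "space_matrix T xs i j = (if fle T (xs i) (xs j) then 0 else 1)"

definition unitvec :: "nat \<Rightarrow> nat \<Rightarrow> int" where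
  "unitvec i k = (if k = i then 1 else 0)"

end

theory Submission
  imports Defs
begin

lemma mem_minopen: "x \<in> minopen T x"
  unfolding minopen_def by blast

lemma fle_antisym:
  assumes "t0_space T" "fle T x y" "fle T y x"
  shows "x = y"
proof (rule ccontr)
  assume ne: "x \<noteq> y"
  have xy: "x \<in> topspace T" "y \<in> topspace T" using assms(2) unfolding fle_def by auto
  then obtain U where U: "openin T U" "x \<notin> U \<longleftrightarrow> y \<in> U"
    using assms(1) ne unfolding t0_space_def by blast
  have eq: "minopen T x = minopen T y" using assms(2,3) unfolding fle_def by auto
  show False
  proof (cases "y \<in> U")
    case True
    then have "minopen T y \<subseteq> U" using U(1) unfolding minopen_def by blast
    then show False using eq mem_minopen[of x T] U True by auto
  next
    case False
    then have "x \<in> U" using U by auto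
    then have "minopen T x \<subseteq> U" using U(1) unfolding minopen_def by blast
    then show False using eq mem_minopen[of y T] U False by auto
  qed
qed

lemma fle_refl: "x \<in> topspace T \<Longrightarrow> fle T x x"
  unfolding fle_def by auto

lemma fle_trans: "fle T x y \<Longrightarrow> fle T y z \<Longrightarrow> fle T x z"
  unfolding fle_def by auto

theorem mainTheorem2:
  fixes T :: "'a topology" and xs :: "nat \<Rightarrow> 'a" and n :: nat
  assumes "finite (topspace T)"
    and "t0_space T"
    and "bij_betw xs {1..n} (topspace T)"
    and "i \<in> {1..n}"
  shows "(up_beat T (xs i) \<longleftrightarrow>
            (\<exists>j \<in> {1..n}. \<forall>k \<in> {1..n}.
               space_matrix T xs i k - space_matrix T xs j k = - unitvec i k))
       \<and> (down_beat T (xs i) \<longleftrightarrow>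
            (\<exists>j \<in> {1..n}. \<forall>k \<in> {1..n}.
               space_matrix T xs k i - space_matrix T xs k j = - unitvec i k))"
proof -
  have inj: "inj_on xs {1..n}" and img: "xs ` {1..n} = topspace T"
    using assms(3) by (auto simp: bij_betw_def)
  have inT: "\<And>k. k \<in> {1..n} \<Longrightarrow> xs k \<in> topspace T" using img by blast
  have surj: "\<And>y. y \<in> topspace T \<Longrightarrow> \<exists>k\<in>{1..n}. xs k = y" using img by (metis imageE)
  have neq: "\<And>k. k \<in> {1..n} \<Longrightarrow> k \<noteq> i \<Longrightarrow> xs k \<noteq> xs i"
    using inj assms(4) by (metis inj_on_def)
  have xi: "xs i \<in> topspace T" using inT assms(4) by auto
  have antis: "\<And>x y. fle T x y \<Longrightarrow> fle T y x \<Longrightarrow> x = y"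
    using fle_antisym[OF assms(2)] by blast
  have cond_up: "(\<forall>k \<in> {1..n}. space_matrix T xs i k - space_matrix T xs j k = - unitvec i k)
     \<longleftrightarrow> (\<not> fle T (xs j) (xs i) \<and> (\<forall>k\<in>{1..n}. k \<noteq> i \<longrightarrow> (fle T (xs i) (xs k) \<longleftrightarrow> fle T (xs j) (xs k))))"
    for j
    using assms(4) fle_refl[OF xi]
    by (auto simp: space_matrix_def unitvec_def split: if_splits)
  have cond_down: "(\<forall>k \<in> {1..n}. space_matrix T xs k i - space_matrix T xs k j = - unitvec i k)
     \<longleftrightarrow> (\<not> fle T (xs i) (xs j) \<and> (\<forall>k\<in>{1..n}. k \<noteq> i \<longrightarrow> (fle T (xs k) (xs i) \<longleftrightarrow> fle T (xs k) (xs j))))"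
    for j
    using assms(4) fle_refl[OF xi]
    by (auto simp: space_matrix_def unitvec_def split: if_splits)
  have up: "up_beat T (xs i) \<longleftrightarrow> (\<exists>j\<in>{1..n}. \<not> fle T (xs j) (xs i) \<and> (\<forall>k\<in>{1..n}. k \<noteq> i \<longrightarrow> (fle T (xs i) (xs k) \<longleftrightarrow> fle T (xs j) (xs k))))"
  proof
    assume "up_beat T (xs i)"
    then obtain m where m: "m \<in> hatF T (xs i)" "\<forall>y \<in> hatF T (xs i). fle T m y"
      unfolding up_beat_def by blast
    have mT: "m \<in> topspace T" and lm: "fle T (xs i) m" "xs i \<noteq> m"
      using m(1) unfolding hatF_def fless_def by auto
    obtain j where j: "j \<in> {1..n}" "xs j = m" using surj[OF mT] by blast
    show "\<exists>j\<in>{1..n}. \<not> fle T (xs j) (xs i) \<and> (\<forall>k\<in>{1..n}. k \<noteq> i \<longrightarrow> (fle T (xs i) (xs k) \<longleftrightarrow> fle T (xs j) (xs k)))"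
    proof (intro bexI[OF _ j(1)] conjI ballI impI)
      show "\<not> fle T (xs j) (xs i)" using antis lm j by metis
    next
      fix k assume k: "k \<in> {1..n}" "k \<noteq> i"
      show "fle T (xs i) (xs k) \<longleftrightarrow> fle T (xs j) (xs k)"
      proof
        assume "fle T (xs i) (xs k)"
        then have "xs k \<in> hatF T (xs i)" using neq[OF k] inT[OF k(1)]
          unfolding hatF_def fless_def by auto
        then show "fle T (xs j) (xs k)" using m(2) j by auto
      next
        assume "fle T (xs j) (xs k)"
        then show "fle T (xs i) (xs k)" using fle_trans lm j by metis
      qed
    qed
  next
    assume "\<exists>j\<in>{1..n}. \<not> fle T (xs j) (xs i) \<and> (\<forall>k\<in>{1..n}. k \<noteq> i \<longrightarrow> (fle T (xs i) (xs k) \<longleftrightarrow> fle T (xs j) (xs k)))"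
    then obtain j where j: "j \<in> {1..n}" "\<not> fle T (xs j) (xs i)"
      "\<forall>k\<in>{1..n}. k \<noteq> i \<longrightarrow> (fle T (xs i) (xs k) \<longleftrightarrow> fle T (xs j) (xs k))" by blast
    have ji: "j \<noteq> i" using j(2) fle_refl[OF xi] by auto
    have lij: "fle T (xs i) (xs j)" using j(3) ji j(1) fle_refl[OF inT[OF j(1)]] by auto
    have mem: "xs j \<in> hatF T (xs i)" using lij j(2) fle_refl[OF xi] inT[OF j(1)]
      unfolding hatF_def fless_def by auto
    show "up_beat T (xs i)" unfolding up_beat_def
    proof (intro bexI[OF _ mem] ballI)
      fix y assume y: "y \<in> hatF T (xs i)"
      then have yT: "y \<in> topspace T" and ly: "fle T (xs i) y" "xs i \<noteq> y"
        unfolding hatF_def fless_def by auto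
      obtain k where k: "k \<in> {1..n}" "xs k = y" using surj[OF yT] by blast
      have "k \<noteq> i" using k ly by auto
      then show "fle T (xs j) y" using j(3) k ly by auto
    qed
  qed
  have down: "down_beat T (xs i) \<longleftrightarrow> (\<exists>j\<in>{1..n}. \<not> fle T (xs i) (xs j) \<and> (\<forall>k\<in>{1..n}. k \<noteq> i \<longrightarrow> (fle T (xs k) (xs i) \<longleftrightarrow> fle T (xs k) (xs j))))"
  proof
    assume "down_beat T (xs i)"
    then obtain m where m: "m \<in> hatU T (xs i)" "\<forall>y \<in> hatU T (xs i). fle T y m"
      unfolding down_beat_def by blast
    have mT: "m \<in> topspace T" and lm: "fle T m (xs i)" "m \<noteq> xs i"
      using m(1) unfolding hatU_def fless_def by auto
    obtain j where j: "j \<in> {1..n}" "xs j = m" using surj[OF mT] by blast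
    show "\<exists>j\<in>{1..n}. \<not> fle T (xs i) (xs j) \<and> (\<forall>k\<in>{1..n}. k \<noteq> i \<longrightarrow> (fle T (xs k) (xs i) \<longleftrightarrow> fle T (xs k) (xs j)))"
    proof (intro bexI[OF _ j(1)] conjI ballI impI)
      show "\<not> fle T (xs i) (xs j)" using antis lm j by metis
    next
      fix k assume k: "k \<in> {1..n}" "k \<noteq> i"
      show "fle T (xs k) (xs i) \<longleftrightarrow> fle T (xs k) (xs j)"
      proof
        assume "fle T (xs k) (xs i)"
        then have "xs k \<in> hatU T (xs i)" using neq[OF k] inT[OF k(1)]
          unfolding hatU_def fless_def by auto
        then show "fle T (xs k) (xs j)" using m(2) j by auto
      next
        assume "fle T (xs k) (xs j)"
        then show "fle T (xs k) (xs i)" using fle_trans lm j by metis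
      qed
    qed
  next
    assume "\<exists>j\<in>{1..n}. \<not> fle T (xs i) (xs j) \<and> (\<forall>k\<in>{1..n}. k \<noteq> i \<longrightarrow> (fle T (xs k) (xs i) \<longleftrightarrow> fle T (xs k) (xs j)))"
    then obtain j where j: "j \<in> {1..n}" "\<not> fle T (xs i) (xs j)"
      "\<forall>k\<in>{1..n}. k \<noteq> i \<longrightarrow> (fle T (xs k) (xs i) \<longleftrightarrow> fle T (xs k) (xs j))" by blast
    have ji: "j \<noteq> i" using j(2) fle_refl[OF xi] by auto
    have lij: "fle T (xs j) (xs i)" using j(3) ji j(1) fle_refl[OF inT[OF j(1)]] by auto
    have mem: "xs j \<in> hatU T (xs i)" using lij j(2) fle_refl[OF xi] inT[OF j(1)]
      unfolding hatU_def fless_def by auto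
    show "down_beat T (xs i)" unfolding down_beat_def
    proof (intro bexI[OF _ mem] ballI)
      fix y assume y: "y \<in> hatU T (xs i)"
      then have yT: "y \<in> topspace T" and ly: "fle T y (xs i)" "y \<noteq> xs i"
        unfolding hatU_def fless_def by auto
      obtain k where k: "k \<in> {1..n}" "xs k = y" using surj[OF yT] by blast
      have "k \<noteq> i" using k ly by auto
      then show "fle T y (xs j)" using j(3) k ly by auto
    qed
  qed
  show ?thesis using up down cond_up cond_down by simp
qed

end
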